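(* There exists $\epsilon_0>0$ such that the following holds for every fixed $\epsilon\in(0,\epsilon_0)$. Let $(G_n)$ be a sequence of graphs, where $G_n$ has $n$ vertices and is $d$-regular for some $d=d(n)\ge 1$, and let $p=\frac{1-\epsilon}{d}$. Then, with probability tending to one as $n\to\infty$, every connected component of $(G_n)_p$ has at most $\frac{9\log n}{\epsilon^2}$ vertices.
   Context: For a graph $G$ and $p\in[0,1]$, $G_p$ denotes the random spanning subgraph of $G$ obtained by retaining each edge of $G$ independently with probability $p$ (bond percolation). $\log$ is the natural logarithm. *)

theory Defs
  imports "HOL-Probability.Probability"
begin

definition simple_graph :: "'a set \<Rightarrow> 'a set set \<Rightarrow> bool" where
  "simple_graph V E \<longleftrightarrow> finite V \<and> (\<forall>e\<in>E. \<exists>u v. e = {u, v} \<and> u \<noteq> v \<and> u \<in> V \<and> v \<in> V)"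

definition degree :: "'a set set \<Rightarrow> 'a \<Rightarrow> nat" where
  "degree E v = card {e\<in>E. v \<in> e}"

definition regular_graph :: "'a set \<Rightarrow> 'a set set \<Rightarrow> nat \<Rightarrow> bool" where
  "regular_graph V E d \<longleftrightarrow> simple_graph V E \<and> (\<forall>v\<in>V. degree E v = d)"

definition percolation :: "'a set set \<Rightarrow> real \<Rightarrow> 'a set set pmf" where
  "percolation E p = map_pmf (\<lambda>f. {e\<in>E. f e}) (Pi_pmf E False (\<lambda>_. bernoulli_pmf p))"

definition component :: "'a set set \<Rightarrow> 'a \<Rightarrow> 'a set" where
  "component F v = {u. (v, u) \<in> {(x, y). {x, y} \<in> F}\<^sup>*}"

end

theory Submission
  imports Defs
begin

definition CL :: "'a set set \<Rightarrow> 'a set \<Rightarrow> 'a set" where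
  "CL F U = {y. \<exists>u\<in>U. (u, y) \<in> {(a, b). {a, b} \<in> F}\<^sup>*}"

definition Wt :: "real \<Rightarrow> 'a set \<Rightarrow> 'a set \<Rightarrow> real" where
  "Wt p E F = p ^ card F * (1 - p) ^ card (E - F)"

lemma Wt_nonneg: "0 \<le> p \<Longrightarrow> p \<le> 1 \<Longrightarrow> 0 \<le> Wt p E F"
  unfolding Wt_def by simp

lemma wt_sum:
  assumes "finite E"
  shows "(\<Sum>F\<in>Pow E. Wt p E F * \<phi> ^ card F) = (1 - p + p * \<phi>) ^ card E"
proof -
  have "(\<Prod>x\<in>E. p * \<phi> + (1 - p)) = (\<Sum>X\<in>Pow E. (\<Prod>x\<in>X. p * \<phi>) * (\<Prod>x\<in>E-X. 1 - p))"
    by (rule prod_add[OF assms])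
  also have "\<dots> = (\<Sum>F\<in>Pow E. Wt p E F * \<phi> ^ card F)"
    by (intro sum.cong refl) (simp add: Wt_def power_mult_distrib)
  finally show ?thesis by (simp add: add.commute)
qed

lemma wt_split:
  assumes "finite E" "D \<subseteq> E"
  shows "(\<Sum>F\<in>Pow E. Wt p E F * h F) =
         (\<Sum>A\<in>Pow D. \<Sum>B\<in>Pow (E - D). Wt p D A * Wt p (E - D) B * h (A \<union> B))"
proof -
  have fD: "finite D" using assms finite_subset by blast
  have bij: "bij_betw (\<lambda>(A, B). A \<union> B) (Pow D \<times> Pow (E - D)) (Pow E)"
  proof (rule bij_betwI')
    fix a b assume "a \<in> Pow D \<times> Pow (E - D)" "b \<in> Pow D \<times> Pow (E - D)"
    then show "((case a of (A, B) \<Rightarrow> A \<union> B) = (case b of (A, B) \<Rightarrow> A \<union> B)) = (a = b)"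
    proof (cases a; cases b)
      fix A B A' B' assume ab: "a = (A, B)" "b = (A', B')"
        "a \<in> Pow D \<times> Pow (E - D)" "b \<in> Pow D \<times> Pow (E - D)"
      then have s: "A \<subseteq> D" "B \<inter> D = {}" "A' \<subseteq> D" "B' \<inter> D = {}" by auto
      have "A \<union> B = A' \<union> B' \<Longrightarrow> A = A' \<and> B = B'"
      proof
        assume e: "A \<union> B = A' \<union> B'"
        have "A = (A \<union> B) \<inter> D" "A' = (A' \<union> B') \<inter> D" using s by auto
        then show "A = A'" using e by simp
        have "B = (A \<union> B) - D" "B' = (A' \<union> B') - D" using s by auto
        then show "B = B'" using e by simp
      qed
      then show ?thesis using ab(1,2) by auto
    qed
  next
    fix a assume "a \<in> Pow D \<times> Pow (E - D)" then show "(case a of (A, B) \<Rightarrow> A \<union> B) \<in> Pow E"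
      using assms by auto
  next
    fix F assume "F \<in> Pow E"
    then show "\<exists>a\<in>Pow D \<times> Pow (E - D). F = (case a of (A, B) \<Rightarrow> A \<union> B)"
      by (intro bexI[of _ "(F \<inter> D, F - D)"]) auto
  qed
  have w: "Wt p E (A \<union> B) = Wt p D A * Wt p (E - D) B" if "A \<subseteq> D" "B \<subseteq> E - D" for A B
  proof -
    have fA: "finite A" "finite B" using that fD assms finite_subset by (meson finite_Diff)+
    have c1: "card (A \<union> B) = card A + card B" using fA that by (intro card_Un_disjoint) auto
    have "E - (A \<union> B) = (D - A) \<union> ((E - D) - B)" using that assms by auto
    moreover have "finite (D - A)" "finite ((E - D) - B)" using fD assms by auto
    moreover have "(D - A) \<inter> ((E - D) - B) = {}" by auto
    ultimately have c2: "card (E - (A \<union> B)) = card (D - A) + card ((E - D) - B)"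
      by (simp add: card_Un_disjoint)
    show ?thesis unfolding Wt_def c1 c2 by (simp add: power_add algebra_simps)
  qed
  have "(\<Sum>F\<in>Pow E. Wt p E F * h F) = (\<Sum>(A,B)\<in>Pow D \<times> Pow (E - D). Wt p E (A \<union> B) * h (A \<union> B))"
    by (subst sum.reindex_bij_betw[OF bij, symmetric]) (simp add: case_prod_beta)
  also have "\<dots> = (\<Sum>(A,B)\<in>Pow D \<times> Pow (E - D). Wt p D A * Wt p (E - D) B * h (A \<union> B))"
    by (intro sum.cong refl) (auto simp: w)
  also have "\<dots> = (\<Sum>A\<in>Pow D. \<Sum>B\<in>Pow (E - D). Wt p D A * Wt p (E - D) B * h (A \<union> B))"
    by (rule sum.cartesian_product[symmetric])
  finally show ?thesis .
qed

lemma CL_empty[simp]: "CL F {} = {}" by (simp add: CL_def)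

lemma CL_sub: "CL B U \<subseteq> U \<union> \<Union>B"
proof
  fix y assume "y \<in> CL B U"
  then obtain u where u: "u \<in> U" "(u, y) \<in> {(a, b). {a, b} \<in> B}\<^sup>*" by (auto simp: CL_def)
  from u(2) show "y \<in> U \<union> \<Union>B"
  proof (cases rule: rtranclE)
    case base then show ?thesis using u by auto
  next
    case (step z) then show ?thesis by auto
  qed
qed

lemma CL_finite: "finite U \<Longrightarrow> finite B \<Longrightarrow> \<forall>e\<in>B. finite e \<Longrightarrow> finite (CL B U)"
  using CL_sub[of B U] by (meson finite_Union finite_UnI finite_subset)

lemma CL_step:
  assumes "u0 \<in> U" "A \<subseteq> {e\<in>E. u0 \<in> e}" "B \<subseteq> E - {e\<in>E. u0 \<in> e}"
  shows "CL (A \<union> B) U \<subseteq> insert u0 (CL B ((U - {u0}) \<union> {w. {u0, w} \<in> A}))"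
proof
  fix y assume "y \<in> CL (A \<union> B) U"
  then obtain u where u: "u \<in> U" "(u, y) \<in> {(a, b). {a, b} \<in> A \<union> B}\<^sup>*" by (auto simp: CL_def)
  let ?W = "(U - {u0}) \<union> {w. {u0, w} \<in> A}"
  from u(2) show "y \<in> insert u0 (CL B ?W)"
  proof (induction rule: rtrancl_induct)
    case base
    show ?case using u(1) by (cases "u = u0") (auto simp: CL_def)
  next
    case (step y z)
    then have yz: "{y, z} \<in> A \<union> B" by auto
    show ?case
    proof (cases "{y, z} \<in> A")
      case True
      then have "u0 \<in> {y, z}" using assms(2) by auto
      show ?thesis
      proof (cases "z = u0")
        case True then show ?thesis by simp
      next
        case False
        then have "y = u0" using \<open>u0 \<in> {y, z}\<close> by auto
        then have "z \<in> ?W" using True by auto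
        then show ?thesis by (auto simp: CL_def)
      qed
    next
      case False
      then have "{y, z} \<in> B" using yz by auto
      then have "u0 \<notin> {y, z}" using assms(3) by auto
      then have "y \<in> CL B ?W" using step.IH by auto
      then obtain w where "w \<in> ?W" "(w, y) \<in> {(a, b). {a, b} \<in> B}\<^sup>*" by (auto simp: CL_def)
      then have "(w, z) \<in> {(a, b). {a, b} \<in> B}\<^sup>*" using \<open>{y, z} \<in> B\<close>
        by (simp add: rtrancl_into_rtrancl)
      then show ?thesis using \<open>w \<in> ?W\<close> by (auto simp: CL_def)
    qed
  qed
qed


lemma main_bound:
  fixes p x \<phi> :: real and d :: nat
  assumes p: "0 \<le> p" "p \<le> 1" and x: "1 \<le> x" and ph: "1 \<le> \<phi>"
    and key: "x * (1 - p + p * \<phi>) ^ d \<le> \<phi>"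
  shows "finite E \<Longrightarrow> (\<forall>e\<in>E. finite e) \<Longrightarrow> (\<forall>v. card {e\<in>E. v \<in> e} \<le> d) \<Longrightarrow> finite U \<Longrightarrow>
    (\<Sum>F\<in>Pow E. Wt p E F * x ^ card (CL F U)) \<le> \<phi> ^ card U"
proof (induction "card E + card U" arbitrary: E U rule: less_induct)
  case less
  note fE = less.prems(1) and fe = less.prems(2) and deg = less.prems(3) and fU = less.prems(4)
  show ?case
  proof (cases "U = {}")
    case True
    then show ?thesis using wt_sum[OF fE, of p 1] by simp
  next
    case False
    then obtain u0 where u0: "u0 \<in> U" by auto
    define D where "D = {e\<in>E. u0 \<in> e}"
    define E' where "E' = E - D"
    define U' where "U' = U - {u0}"
    define N where "N = (\<lambda>A. {w. {u0, w} \<in> A})"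
    have DE: "D \<subseteq> E" by (auto simp: D_def)
    have fD: "finite D" using DE fE finite_subset by blast
    have cD: "card D \<le> d" using deg by (simp add: D_def)
    have cDE: "card D \<le> card E" using DE fE card_mono by blast
    have fE': "finite E'" using fE by (simp add: E'_def)
    have cE': "card E' = card E - card D" unfolding E'_def using DE fD by (simp add: card_Diff_subset)
    have cU: "card U' = card U - 1" "card U \<ge> 1" using u0 fU by (auto simp: U'_def card_gt_0_iff Suc_le_eq)
    have fU': "finite U'" using fU by (simp add: U'_def)
    have NA: "finite (N A) \<and> card (N A) \<le> card A" if "A \<subseteq> D" for A
    proof -
      have fA: "finite A" using that fD finite_subset by blast
      have inj: "inj_on (\<lambda>w. {u0, w}) (N A)" by (auto simp: inj_on_def doubleton_eq_iff)
      have im: "(\<lambda>w. {u0, w}) ` (N A) \<subseteq> A" by (auto simp: N_def)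
      have "finite (N A)" using finite_imageD[OF finite_subset[OF im fA] inj] .
      moreover have "card (N A) \<le> card A" by (rule card_inj_on_le[OF inj im fA])
      ultimately show ?thesis by simp
    qed
    have base: "1 \<le> 1 - p + p * \<phi>" using p ph by (simp add: mult_left_mono[of 1 \<phi> p, simplified])
    have Wnn: "\<And>E F. 0 \<le> Wt p E F" using Wt_nonneg p by blast
    have IH: "(\<Sum>B\<in>Pow E'. Wt p E' B * x ^ card (CL B (U' \<union> N A))) \<le> \<phi> ^ card (U' \<union> N A)"
      if "A \<subseteq> D" for A
    proof (rule less.hyps)
      have "card (U' \<union> N A) \<le> card U' + card (N A)" by (rule card_Un_le)
      also have "\<dots> \<le> card U - 1 + card D" using NA[OF that] cU card_mono[OF fD that] by linarith
      finally have "card (U' \<union> N A) \<le> card U - 1 + card D" .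
      then show "card E' + card (U' \<union> N A) < card E + card U" using cE' cU cDE by linarith
      show "finite E'" by fact
      show "\<forall>e\<in>E'. finite e" using fe by (simp add: E'_def)
      show "\<forall>v. card {e \<in> E'. v \<in> e} \<le> d"
      proof
        fix v have "card {e \<in> E'. v \<in> e} \<le> card {e \<in> E. v \<in> e}"
          using fE by (intro card_mono) (auto simp: E'_def)
        then show "card {e \<in> E'. v \<in> e} \<le> d" using deg le_trans by blast
      qed
      show "finite (U' \<union> N A)" using fU' NA[OF that] by simp
    qed
    have step1: "x ^ card (CL (A \<union> B) U) \<le> x * x ^ card (CL B (U' \<union> N A))"
      if "A \<subseteq> D" "B \<subseteq> E'" for A B
    proof -
      have fB: "finite B" using that fE' finite_subset by blast
      have fCL: "finite (CL B (U' \<union> N A))"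
        using CL_finite[OF _ fB] fU' NA[OF that(1)] fe that(2) by (auto simp: E'_def)
      have "CL (A \<union> B) U \<subseteq> insert u0 (CL B (U' \<union> N A))"
        unfolding U'_def N_def using CL_step[OF u0, of A E B] that by (auto simp: D_def E'_def)
      then have "card (CL (A \<union> B) U) \<le> card (insert u0 (CL B (U' \<union> N A)))"
        using fCL by (intro card_mono) auto
      also have "\<dots> \<le> Suc (card (CL B (U' \<union> N A)))" using fCL by (simp add: card_insert_if)
      finally have "x ^ card (CL (A \<union> B) U) \<le> x ^ Suc (card (CL B (U' \<union> N A)))"
        using x by (intro power_increasing) auto
      then show ?thesis by simp
    qed
    have "(\<Sum>F\<in>Pow E. Wt p E F * x ^ card (CL F U)) =
         (\<Sum>A\<in>Pow D. \<Sum>B\<in>Pow E'. Wt p D A * Wt p E' B * x ^ card (CL (A \<union> B) U))"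
      unfolding E'_def by (rule wt_split[OF fE DE])
    also have "\<dots> \<le> (\<Sum>A\<in>Pow D. \<Sum>B\<in>Pow E'. Wt p D A * Wt p E' B * (x * x ^ card (CL B (U' \<union> N A))))"
      by (intro sum_mono mult_left_mono step1) (auto intro: mult_nonneg_nonneg Wnn)
    also have "\<dots> = (\<Sum>A\<in>Pow D. x * Wt p D A * (\<Sum>B\<in>Pow E'. Wt p E' B * x ^ card (CL B (U' \<union> N A))))"
      by (simp add: sum_distrib_left mult_ac)
    also have "\<dots> \<le> (\<Sum>A\<in>Pow D. x * Wt p D A * \<phi> ^ card (U' \<union> N A))"
      using x by (intro sum_mono mult_left_mono IH) (auto intro: mult_nonneg_nonneg Wnn)
    also have "\<dots> \<le> (\<Sum>A\<in>Pow D. x * Wt p D A * (\<phi> ^ card U' * \<phi> ^ card A))"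
    proof (intro sum_mono mult_left_mono)
      fix A assume "A \<in> Pow D"
      then have "card (U' \<union> N A) \<le> card U' + card A"
        using NA[of A] card_Un_le[of U' "N A"] by auto
      then show "\<phi> ^ card (U' \<union> N A) \<le> \<phi> ^ card U' * \<phi> ^ card A"
        using ph by (simp add: power_add[symmetric] power_increasing)
    qed (use x in \<open>auto intro: mult_nonneg_nonneg Wnn\<close>)
    also have "\<dots> = x * \<phi> ^ card U' * (\<Sum>A\<in>Pow D. Wt p D A * \<phi> ^ card A)"
      by (simp add: sum_distrib_left mult_ac)
    also have "\<dots> = x * \<phi> ^ card U' * (1 - p + p * \<phi>) ^ card D"
      by (simp add: wt_sum[OF fD])
    also have "\<dots> \<le> x * \<phi> ^ card U' * (1 - p + p * \<phi>) ^ d"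
      using x ph base cD by (intro mult_left_mono power_increasing) auto
    also have "\<dots> = \<phi> ^ card U' * (x * (1 - p + p * \<phi>) ^ d)" by simp
    also have "\<dots> \<le> \<phi> ^ card U' * \<phi>" using key ph by (intro mult_left_mono) auto
    also have "\<dots> = \<phi> ^ card U" using cU by (metis Suc_diff_1 less_le_trans power_Suc2 zero_less_one)
    finally show ?thesis .
  qed
qed


lemma perc_set: "set_pmf (percolation E p) \<subseteq> Pow E"
  unfolding percolation_def by auto

lemma perc_pmf:
  assumes fE: "finite E" and p: "0 \<le> p" "p \<le> 1" and FE: "F \<subseteq> E"
  shows "pmf (percolation E p) F = Wt p E F"
proof -
  let ?M = "Pi_pmf E False (\<lambda>_. bernoulli_pmf p)"
  let ?g = "\<lambda>f. {e\<in>E. f e}"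
  let ?f0 = "\<lambda>e. e \<in> F"
  have eq: "?g -` {F} \<inter> set_pmf ?M = {?f0} \<inter> set_pmf ?M"
  proof -
    have "f = ?f0" if "f \<in> set_pmf ?M" "?g f = F" for f
    proof
      fix e show "f e = (e \<in> F)"
        using that set_Pi_pmf_subset[OF fE, of False "\<lambda>_. bernoulli_pmf p"] by auto
    qed
    moreover have "?g ?f0 = F" using FE by auto
    ultimately show ?thesis by auto
  qed
  have "pmf (percolation E p) F = measure ?M (?g -` {F})"
    unfolding percolation_def by (rule pmf_map)
  also have "\<dots> = measure ?M (?g -` {F} \<inter> set_pmf ?M)" by (simp add: measure_Int_set_pmf)
  also have "\<dots> = measure ?M ({?f0} \<inter> set_pmf ?M)" by (simp only: eq)
  also have "\<dots> = pmf ?M ?f0" by (simp add: measure_Int_set_pmf measure_pmf_single)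
  also have "\<dots> = (\<Prod>e\<in>E. pmf (bernoulli_pmf p) (e \<in> F))"
    using FE by (intro pmf_Pi'[OF fE]) auto
  also have "\<dots> = (\<Prod>e\<in>E - F. pmf (bernoulli_pmf p) (e \<in> F)) * (\<Prod>e\<in>F. pmf (bernoulli_pmf p) (e \<in> F))"
    by (rule prod.subset_diff[OF FE fE])
  also have "\<dots> = (\<Prod>e\<in>E - F. 1 - p) * (\<Prod>e\<in>F. p)"
    using p by (intro arg_cong2[where f="(*)"] prod.cong) auto
  also have "\<dots> = Wt p E F" by (simp add: Wt_def)
  finally show ?thesis .
qed

lemma perc_prob:
  assumes fE: "finite E" and p: "0 \<le> p" "p \<le> 1"
  shows "measure_pmf.prob (percolation E p) S = (\<Sum>F\<in>Pow E \<inter> S. Wt p E F)"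
proof -
  let ?M = "percolation E p"
  have "measure_pmf.prob ?M S = measure_pmf.prob ?M (S \<inter> set_pmf ?M)" by (simp add: measure_Int_set_pmf)
  also have "S \<inter> set_pmf ?M = (Pow E \<inter> S) \<inter> set_pmf ?M" using perc_set[of E p] by auto
  also have "measure_pmf.prob ?M \<dots> = measure_pmf.prob ?M (Pow E \<inter> S)" by (simp add: measure_Int_set_pmf)
  also have "\<dots> = sum (pmf ?M) (Pow E \<inter> S)" using fE by (intro measure_measure_pmf_finite) auto
  also have "\<dots> = (\<Sum>F\<in>Pow E \<inter> S. Wt p E F)" using perc_pmf[OF fE p] by (intro sum.cong) auto
  finally show ?thesis .
qed


lemma key_ineq:
  fixes \<epsilon> p :: real and d :: nat
  assumes e: "0 < \<epsilon>" "\<epsilon> < 1/2" and p: "0 \<le> p" "real d * p = 1 - \<epsilon>"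
  shows "exp (\<epsilon>\<^sup>2/4) * (1 - p + p * (1 + \<epsilon>/2)) ^ d \<le> 1 + \<epsilon>/2"
proof -
  have "(1 - p + p * (1 + \<epsilon>/2)) ^ d = (1 + p * \<epsilon>/2) ^ d" by (simp add: algebra_simps)
  also have "\<dots> \<le> exp (p * \<epsilon>/2) ^ d"
    using p e exp_ge_add_one_self[of "p * \<epsilon>/2"] by (intro power_mono) (auto simp: add.commute[of 1])
  also have "\<dots> = exp (real d * (p * \<epsilon>/2))" by (rule exp_of_nat_mult[symmetric])
  also have "real d * (p * \<epsilon>/2) = (1 - \<epsilon>) * \<epsilon> / 2" by (subst p(2)[symmetric]) (simp add: algebra_simps)
  finally have 1: "(1 - p + p * (1 + \<epsilon>/2)) ^ d \<le> exp ((1 - \<epsilon>) * \<epsilon> / 2)" .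
  have "\<epsilon>/2 - (\<epsilon>/2)\<^sup>2 \<le> ln (1 + \<epsilon>/2)" using e by (intro ln_one_plus_pos_lower_bound) auto
  moreover have "\<epsilon>\<^sup>2/4 + (1 - \<epsilon>) * \<epsilon> / 2 = \<epsilon>/2 - (\<epsilon>/2)\<^sup>2" by (simp add: power2_eq_square field_simps)
  ultimately have 2: "\<epsilon>\<^sup>2/4 + (1 - \<epsilon>) * \<epsilon> / 2 \<le> ln (1 + \<epsilon>/2)" by linarith
  have "exp (\<epsilon>\<^sup>2/4) * (1 - p + p * (1 + \<epsilon>/2)) ^ d \<le> exp (\<epsilon>\<^sup>2/4) * exp ((1 - \<epsilon>) * \<epsilon> / 2)"
    using 1 by (intro mult_left_mono) auto
  also have "\<dots> = exp (\<epsilon>\<^sup>2/4 + (1 - \<epsilon>) * \<epsilon> / 2)" by (simp add: exp_add)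
  also have "\<dots> \<le> exp (ln (1 + \<epsilon>/2))" using 2 by simp
  also have "\<dots> = 1 + \<epsilon>/2" using e by simp
  finally show ?thesis .
qed

lemma graph_bound:
  fixes \<epsilon> :: real
  assumes G: "regular_graph {0..<n} E d" and d: "d \<ge> 1" and e: "0 < \<epsilon>" "\<epsilon> < 1/2" and n: "n \<ge> 1"
  shows "1 - (1 + \<epsilon>/2) * real n * exp (-(9/4) * ln (real n)) \<le>
    measure_pmf.prob (percolation E ((1 - \<epsilon>) / real d))
      {F. \<forall>v\<in>{0..<n}. real (card (component F v)) \<le> 9 * ln (real n) / \<epsilon>\<^sup>2}"
proof -
  define p where "p = (1 - \<epsilon>) / real d"
  define S where "S = {F. \<forall>v\<in>{0..<n}. real (card (component F v)) \<le> 9 * ln (real n) / \<epsilon>\<^sup>2}"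
  define x where "x = exp (\<epsilon>\<^sup>2/4)"
  define \<phi> where "\<phi> = 1 + \<epsilon>/2"
  define c where "c = exp (-(9/4) * ln (real n))"
  have p0: "0 \<le> p" "p \<le> 1" using d e by (auto simp: p_def field_simps)
  have dp: "real d * p = 1 - \<epsilon>" using d by (simp add: p_def)
  have sg: "simple_graph {0..<n} E" and degE: "\<forall>v\<in>{0..<n}. degree E v = d"
    using G by (auto simp: regular_graph_def)
  have Esub: "E \<subseteq> Pow {0..<n}" using sg unfolding simple_graph_def by auto
  have fE: "finite E" using Esub finite_subset by (metis finite_Pow_iff finite_atLeastLessThan)
  have fe: "\<forall>e\<in>E. finite e" using Esub finite_subset by blast
  have deg: "\<forall>v. card {e\<in>E. v \<in> e} \<le> d"
  proof
    fix v show "card {e\<in>E. v \<in> e} \<le> d"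
    proof (cases "v \<in> {0..<n}")
      case True then show ?thesis using degE by (simp add: degree_def)
    next
      case False then have "{e\<in>E. v \<in> e} = {}" using Esub by blast
      then have "card {e\<in>E. v \<in> e} = 0" by (simp only: card.empty)
      then show ?thesis by linarith
    qed
  qed
  have x1: "1 \<le> x" using e by (simp add: x_def)
  have ph1: "1 \<le> \<phi>" using e by (simp add: \<phi>_def)
  have key: "x * (1 - p + p * \<phi>) ^ d \<le> \<phi>" unfolding x_def \<phi>_def by (rule key_ineq[OF e p0(1) dp])
  note mb = main_bound[OF p0 x1 ph1 key fE fe deg]
  have Wnn: "\<And>F. 0 \<le> Wt p E F" using Wt_nonneg p0 by blast
  have comp: "component F v = CL F {v}" for F v by (simp add: component_def CL_def)
  define h where "h = (\<lambda>F. c * (\<Sum>v\<in>{0..<n}. x ^ card (CL F {v})))"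
  have hbad: "1 \<le> h F" if nS: "F \<notin> S" for F
  proof -
    obtain v where v: "v \<in> {0..<n}" "real (card (component F v)) > 9 * ln (real n) / \<epsilon>\<^sup>2"
    proof -
      from nS have "\<not> (\<forall>v\<in>{0..<n}. real (card (component F v)) \<le> 9 * ln (real n) / \<epsilon>\<^sup>2)"
        unfolding S_def by blast
      then show ?thesis using that by (meson not_le)
    qed
    let ?m = "card (CL F {v})"
    have "9 * ln (real n) / \<epsilon>\<^sup>2 * (\<epsilon>\<^sup>2/4) < real ?m * (\<epsilon>\<^sup>2/4)"
      using v(2) e by (intro mult_strict_right_mono) (auto simp: comp)
    then have lt: "(9/4) * ln (real n) < real ?m * (\<epsilon>\<^sup>2/4)" using e by (simp add: field_simps)
    have "1 = exp (-(9/4) * ln (real n) + (9/4) * ln (real n))" by simp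
    also have "\<dots> \<le> exp (-(9/4) * ln (real n) + real ?m * (\<epsilon>\<^sup>2/4))" using lt by simp
    also have "\<dots> = c * x ^ ?m" unfolding c_def x_def exp_add exp_of_nat_mult[symmetric] ..
    also have "\<dots> \<le> c * (\<Sum>v\<in>{0..<n}. x ^ card (CL F {v}))"
      using v(1) x1 by (intro mult_left_mono member_le_sum[where f="\<lambda>v. x ^ card (CL F {v})"])
        (auto simp: c_def)
    finally show ?thesis by (simp add: h_def)
  qed
  have hnn: "0 \<le> h F" for F using x1 unfolding h_def c_def
    by (intro mult_nonneg_nonneg sum_nonneg) auto
  have tot: "(\<Sum>F\<in>Pow E. Wt p E F) = 1" using wt_sum[OF fE, of p 1] by simp
  have "(\<Sum>F\<in>Pow E - S. Wt p E F) \<le> (\<Sum>F\<in>Pow E - S. Wt p E F * h F)"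
  proof (intro sum_mono)
    fix F assume "F \<in> Pow E - S"
    then have "1 \<le> h F" using hbad by auto
    then have "Wt p E F * 1 \<le> Wt p E F * h F" using Wnn[of F] by (intro mult_left_mono) auto
    then show "Wt p E F \<le> Wt p E F * h F" by simp
  qed
  also have "\<dots> \<le> (\<Sum>F\<in>Pow E. Wt p E F * h F)"
    using fE Wnn hnn by (intro sum_mono2) auto
  also have "\<dots> = c * (\<Sum>v\<in>{0..<n}. \<Sum>F\<in>Pow E. Wt p E F * x ^ card (CL F {v}))"
    by (simp add: h_def sum_distrib_left sum_distrib_right mult_ac sum.swap[of _ "Pow E"])
  also have "\<dots> \<le> c * (\<Sum>v\<in>{0..<n}. \<phi>)"
    using mb[of "{_}"] by (intro mult_left_mono sum_mono) (auto simp: c_def)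
  also have "\<dots> = (1 + \<epsilon>/2) * real n * exp (-(9/4) * ln (real n))" by (simp add: c_def \<phi>_def)
  finally have bad: "(\<Sum>F\<in>Pow E - S. Wt p E F) \<le> (1 + \<epsilon>/2) * real n * exp (-(9/4) * ln (real n))" .
  have "(\<Sum>F\<in>Pow E. Wt p E F) = (\<Sum>F\<in>Pow E \<inter> S. Wt p E F) + (\<Sum>F\<in>Pow E - S. Wt p E F)"
    using fE by (simp add: sum.Int_Diff)
  then have "measure_pmf.prob (percolation E p) S = 1 - (\<Sum>F\<in>Pow E - S. Wt p E F)"
    using tot perc_prob[OF fE p0, of S] by simp
  then show ?thesis using bad by (simp add: p_def S_def)
qed


lemma aux_lim:
  fixes c :: real
  shows "((\<lambda>t::real. c * t * exp (-(9/4) * ln t)) \<longlongrightarrow> 0) at_top"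
proof -
  have l1: "filterlim (\<lambda>t::real. (5/4) * ln t) at_top at_top"
    by (rule filterlim_tendsto_pos_mult_at_top[OF tendsto_const _ ln_at_top]) simp
  have l2: "filterlim (\<lambda>t::real. - ((5/4) * ln t)) at_bot at_top"
    using l1 by (simp add: filterlim_uminus_at_top)
  have l3: "((\<lambda>t::real. exp (- ((5/4) * ln t))) \<longlongrightarrow> 0) at_top"
    by (rule filterlim_compose[OF exp_at_bot l2])
  have l4: "((\<lambda>t::real. c * exp (- ((5/4) * ln t))) \<longlongrightarrow> 0) at_top"
    using tendsto_mult[OF tendsto_const l3, of c] by simp
  have ev: "eventually (\<lambda>t::real. c * exp (- ((5/4) * ln t)) = c * t * exp (-(9/4) * ln t)) at_top"
  proof (rule eventually_mono[OF eventually_gt_at_top[of 0]])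
    fix t :: real assume t: "0 < t"
    have "c * t * exp (-(9/4) * ln t) = c * (exp (ln t) * exp (-(9/4) * ln t))" using t by simp
    also have "\<dots> = c * exp (- ((5/4) * ln t))" by (simp add: exp_add[symmetric])
    finally show "c * exp (- ((5/4) * ln t)) = c * t * exp (-(9/4) * ln t)" by (rule sym)
  qed
  show ?thesis using tendsto_cong[OF ev] l4 by simp
qed

theorem mainTheorem1:
  shows "\<exists>\<epsilon>0::real. \<epsilon>0 > 0 \<and>
    (\<forall>\<epsilon>::real. 0 < \<epsilon> \<and> \<epsilon> < \<epsilon>0 \<longrightarrow>
      (\<forall>(N :: nat \<Rightarrow> nat) (d :: nat \<Rightarrow> nat) (G :: nat \<Rightarrow> nat set set).
         filterlim N at_top sequentially \<and>
         (\<forall>k. d k \<ge> 1 \<and> regular_graph {0..<N k} (G k) (d k)) \<longrightarrow>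
         ((\<lambda>k. measure_pmf.prob (percolation (G k) ((1 - \<epsilon>) / real (d k)))
                 {F. \<forall>v\<in>{0..<N k}. real (card (component F v)) \<le> 9 * ln (real (N k)) / \<epsilon>\<^sup>2})
           \<longlonglongrightarrow> 1)))"
proof (intro exI[of _ "1/2"] conjI allI impI)
  show "(0::real) < 1/2" by simp
  fix \<epsilon> :: real and N d and G :: "nat \<Rightarrow> nat set set"
  assume e: "0 < \<epsilon> \<and> \<epsilon> < 1/2"
  assume h: "filterlim N at_top sequentially \<and> (\<forall>k. d k \<ge> 1 \<and> regular_graph {0..<N k} (G k) (d k))"
  define P where "P = (\<lambda>k. measure_pmf.prob (percolation (G k) ((1 - \<epsilon>) / real (d k)))
                 {F. \<forall>v\<in>{0..<N k}. real (card (component F v)) \<le> 9 * ln (real (N k)) / \<epsilon>\<^sup>2})"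
  define b where "b = (\<lambda>k. (1 + \<epsilon>/2) * real (N k) * exp (-(9/4) * ln (real (N k))))"
  have rN: "filterlim (\<lambda>k. real (N k)) at_top sequentially"
    by (rule filterlim_compose[OF filterlim_real_sequentially]) (use h in blast)
  have b0: "b \<longlonglongrightarrow> 0" unfolding b_def
    by (rule filterlim_compose[OF aux_lim rN])
  have lo: "(\<lambda>k. 1 - b k) \<longlonglongrightarrow> 1" using tendsto_diff[OF tendsto_const b0, of 1] by simp
  have evN: "eventually (\<lambda>k. 1 \<le> N k) sequentially"
    using h filterlim_at_top by blast
  have ev1: "eventually (\<lambda>k. 1 - b k \<le> P k) sequentially"
  proof (rule eventually_mono[OF evN])
    fix k assume "1 \<le> N k"
    then show "1 - b k \<le> P k" unfolding b_def P_def
      using graph_bound[of "N k" "G k" "d k" \<epsilon>] h e by blast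
  qed
  have ev2: "eventually (\<lambda>k. P k \<le> 1) sequentially" by (simp add: P_def)
  have "P \<longlonglongrightarrow> 1" by (rule tendsto_sandwich[OF ev1 ev2 lo tendsto_const])
  then show "(\<lambda>k. measure_pmf.prob (percolation (G k) ((1 - \<epsilon>) / real (d k)))
                 {F. \<forall>v\<in>{0..<N k}. real (card (component F v)) \<le> 9 * ln (real (N k)) / \<epsilon>\<^sup>2})
           \<longlonglongrightarrow> 1" by (simp add: P_def)
qed

end
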